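(* Let $K$ and $L$ be regular languages over a finite alphabet $A$ with syntactic monoids $M$ and $N$, where $|M|=m$ and $|N|=n$, and let $a\in A$. Then the syntactic monoid of the language $KaL=\{\,uav\mid u\in K,\ v\in L\,\}$ has at most $mn(2^{mn}-1)+1$ elements.
   Context: The syntactic congruence of $R\subseteq A^*$ is $u\sim_R v$ iff for all $p,q\in A^*$, $puq\in R\Leftrightarrow pvq\in R$; the syntactic monoid of $R$ is $A^*/{\sim_R}$. *)

theory Defs
  imports Main
begin

definition regular :: "'a list set \<Rightarrow> bool" where
  "regular R \<longleftrightarrow> (\<exists>(Q :: nat set) (\<delta> :: nat \<Rightarrow> 'a \<Rightarrow> nat) q0 F.
      finite Q \<and> q0 \<in> Q \<and> F \<subseteq> Q \<and> (\<forall>q\<in>Q. \<forall>x. \<delta> q x \<in> Q) \<and>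
      R = {w. foldl \<delta> q0 w \<in> F})"

definition synt_cong :: "'a list set \<Rightarrow> ('a list \<times> 'a list) set" where
  "synt_cong R = {(u, v). \<forall>p q. p @ u @ q \<in> R \<longleftrightarrow> p @ v @ q \<in> R}"

definition synt_monoid :: "'a list set \<Rightarrow> 'a list set set" where
  "synt_monoid R = UNIV // synt_cong R"

definition marked_concat :: "'a list set \<Rightarrow> 'a \<Rightarrow> 'a list set \<Rightarrow> 'a list set" where
  "marked_concat K a L = {u @ [a] @ v | u v. u \<in> K \<and> v \<in> L}"

end

theory Submission
  imports Defs "HOL-Library.FuncSet"
begin

lemma synt_equiv: "equiv UNIV (synt_cong R)"
  unfolding equiv_def refl_on_def sym_def trans_def synt_cong_def by auto

lemma synt_class_eq: "(synt_cong R `` {x} = synt_cong R `` {y}) \<longleftrightarrow> (x, y) \<in> synt_cong R"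
  using eq_equiv_class_iff[OF synt_equiv] by blast

lemma synt_use: "(u, v) \<in> synt_cong R \<Longrightarrow> (p @ u @ q \<in> R) = (p @ v @ q \<in> R)"
  unfolding synt_cong_def by auto

lemma quot_card_le:
  assumes "equiv UNIV R" "\<And>x y. f x = f y \<Longrightarrow> (x,y)\<in>R" "finite (range f)"
  shows "finite (UNIV//R) \<and> card (UNIV//R) \<le> card (range f)"
proof -
  have sub: "UNIV//R \<subseteq> (\<lambda>b. R``{inv f b}) ` range f"
  proof
    fix X assume "X \<in> UNIV//R"
    then obtain x where X: "X = R``{x}" by (auto simp: quotient_def)
    have "f (inv f (f x)) = f x" by (simp add: f_inv_into_f)
    then have "(inv f (f x), x) \<in> R" using assms(2) by blast
    then have "R``{inv f (f x)} = R``{x}" using equiv_class_eq[OF assms(1)] by blast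
    then show "X \<in> (\<lambda>b. R``{inv f b}) ` range f" using X by blast
  qed
  have fin: "finite ((\<lambda>b. R``{inv f b}) ` range f)" using assms(3) by simp
  have c1: "card (UNIV//R) \<le> card ((\<lambda>b. R``{inv f b}) ` range f)" by (rule card_mono[OF fin sub])
  have c2: "card ((\<lambda>b. R``{inv f b}) ` range f) \<le> card (range f)" by (rule card_image_le[OF assms(3)])
  show ?thesis
  proof
    show "finite (UNIV//R)" by (rule finite_subset[OF sub fin])
    show "card (UNIV//R) \<le> card (range f)" by (rule order_trans[OF c1 c2])
  qed
qed

lemma foldl_in: "q \<in> Q \<Longrightarrow> \<forall>q\<in>Q. \<forall>x. \<delta> q x \<in> Q \<Longrightarrow> foldl \<delta> q w \<in> Q"
  by (induction w arbitrary: q) auto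

lemma regular_finite: assumes "regular R" shows "finite (synt_monoid R)"
proof -
  obtain Q :: "nat set" and \<delta> q0 F where H: "finite Q" "q0 \<in> Q" "F \<subseteq> Q" "\<forall>q\<in>Q. \<forall>x. \<delta> q x \<in> Q"
    "R = {w. foldl \<delta> q0 w \<in> F}" using assms unfolding regular_def by metis
  define f where "f w = restrict (\<lambda>q. foldl \<delta> q w) Q" for w
  have r: "range f \<subseteq> Q \<rightarrow>\<^sub>E Q" using foldl_in[OF _ H(4)] by (auto simp: f_def)
  have fin: "finite (range f)" by (rule finite_subset[OF r finite_PiE[OF H(1) H(1)]])
  have rel: "(u, v) \<in> synt_cong R" if "f u = f v" for u v
    unfolding synt_cong_def
  proof (clarify)
    fix p q
    have "foldl \<delta> q0 p \<in> Q" using foldl_in[OF H(2) H(4)] .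
    then have "foldl \<delta> (foldl \<delta> q0 p) u = foldl \<delta> (foldl \<delta> q0 p) v"
      using that unfolding f_def by (metis restrict_apply')
    then show "(p @ u @ q \<in> R) = (p @ v @ q \<in> R)" using H(5) by simp
  qed
  show ?thesis unfolding synt_monoid_def using quot_card_le[OF synt_equiv rel fin] by blast
qed

lemma split2: "(\<exists>u v. x @ y = u @ a # v \<and> P u v) \<longleftrightarrow>
  (\<exists>x1 x2. x = x1 @ a # x2 \<and> P x1 (x2 @ y)) \<or> (\<exists>y1 y2. y = y1 @ a # y2 \<and> P (x @ y1) y2)"
proof
  assume "\<exists>u v. x @ y = u @ a # v \<and> P u v"
  then obtain u v where e: "x @ y = u @ a # v" and p: "P u v" by blast
  from e[unfolded append_eq_append_conv2] obtain us where
    "x = u @ us \<and> us @ y = a # v \<or> x @ us = u \<and> y = us @ a # v" by blast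
  then show "(\<exists>x1 x2. x = x1 @ a # x2 \<and> P x1 (x2 @ y)) \<or> (\<exists>y1 y2. y = y1 @ a # y2 \<and> P (x @ y1) y2)"
  proof
    assume h: "x = u @ us \<and> us @ y = a # v"
    show ?thesis
    proof (cases us)
      case Nil
      then have "y = [] @ a # v \<and> P (x @ []) v" using h p by simp
      then show ?thesis by blast
    next
      case (Cons b us')
      then have "x = u @ a # us' \<and> P u (us' @ y)" using h p by simp
      then show ?thesis by blast
    qed
  next
    assume h: "x @ us = u \<and> y = us @ a # v"
    then have "y = us @ a # v \<and> P (x @ us) v" using p by simp
    then show ?thesis by blast
  qed
next
  assume "(\<exists>x1 x2. x = x1 @ a # x2 \<and> P x1 (x2 @ y)) \<or> (\<exists>y1 y2. y = y1 @ a # y2 \<and> P (x @ y1) y2)"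
  then show "\<exists>u v. x @ y = u @ a # v \<and> P u v"
  proof
    assume "\<exists>x1 x2. x = x1 @ a # x2 \<and> P x1 (x2 @ y)"
    then obtain x1 x2 where "x = x1 @ a # x2" "P x1 (x2 @ y)" by blast
    then have "x @ y = x1 @ a # (x2 @ y) \<and> P x1 (x2 @ y)" by simp
    then show ?thesis by blast
  next
    assume "\<exists>y1 y2. y = y1 @ a # y2 \<and> P (x @ y1) y2"
    then obtain y1 y2 where "y = y1 @ a # y2" "P (x @ y1) y2" by blast
    then have "x @ y = (x @ y1) @ a # y2 \<and> P (x @ y1) y2" by simp
    then show ?thesis by blast
  qed
qed

lemma split3: "(\<exists>u v. p @ w @ q = u @ a # v \<and> P u v) \<longleftrightarrow>
  (\<exists>p1 p2. p = p1 @ a # p2 \<and> P p1 (p2 @ w @ q)) \<or>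
  (\<exists>w1 w2. w = w1 @ a # w2 \<and> P (p @ w1) (w2 @ q)) \<or>
  (\<exists>q1 q2. q = q1 @ a # q2 \<and> P (p @ w @ q1) q2)"
proof -
  have e1: "(\<exists>u v. p @ (w @ q) = u @ a # v \<and> P u v) \<longleftrightarrow>
    (\<exists>x1 x2. p = x1 @ a # x2 \<and> P x1 (x2 @ w @ q)) \<or> (\<exists>y1 y2. w @ q = y1 @ a # y2 \<and> P (p @ y1) y2)"
    by (rule split2)
  have e2: "(\<exists>y1 y2. w @ q = y1 @ a # y2 \<and> P (p @ y1) y2) \<longleftrightarrow>
    (\<exists>x1 x2. w = x1 @ a # x2 \<and> P (p @ x1) (x2 @ q)) \<or> (\<exists>y1 y2. q = y1 @ a # y2 \<and> P (p @ w @ y1) y2)"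
    using split2[of w q a "\<lambda>u v. P (p @ u) v"] by simp
  show ?thesis unfolding e1 e2 by (rule refl)
qed

theorem proposition4:
  fixes K L :: "'a list set" and a :: 'a and m n :: nat
  assumes "finite (UNIV :: 'a set)"
    and "regular K" and "regular L"
    and "card (synt_monoid K) = m" and "card (synt_monoid L) = n"
  shows "card (synt_monoid (marked_concat K a L)) \<le> m * n * (2 ^ (m * n) - 1) + 1"
proof -
  define M where "M = synt_monoid K"
  define N where "N = synt_monoid L"
  define eta where "eta w = synt_cong K `` {w}" for w
  define mu where "mu w = synt_cong L `` {w}" for w
  define Phi where "Phi w p q = (\<exists>u v. w = u @ a # v \<and> p @ u \<in> K \<and> v @ q \<in> L)" for w p q
  define T where "T w = {(eta p, mu q) | p q. Phi w p q}" for w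
  define P where "P w = (if \<forall>p q. Phi w p q then None else Some (eta w, mu w, T w))" for w
  have finM: "finite M" using regular_finite[OF assms(2)] M_def by simp
  have finN: "finite N" using regular_finite[OF assms(3)] N_def by simp
  have Mr: "M = range eta" unfolding M_def eta_def synt_monoid_def quotient_def by auto
  have Nr: "N = range mu" unfolding N_def mu_def synt_monoid_def quotient_def by auto
  have Tiff: "(eta p, mu q) \<in> T w \<longleftrightarrow> Phi w p q" for w p q
  proof
    assume "(eta p, mu q) \<in> T w"
    then obtain p' q' where e: "eta p = eta p'" "mu q = mu q'" and ph: "Phi w p' q'"
      unfolding T_def by auto
    have r1: "(p, p') \<in> synt_cong K" using e(1) synt_class_eq unfolding eta_def by metis
    have r2: "(q, q') \<in> synt_cong L" using e(2) synt_class_eq unfolding mu_def by metis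
    have "p @ u \<in> K \<longleftrightarrow> p' @ u \<in> K" for u using synt_use[OF r1, of "[]" u] by simp
    moreover have "v @ q \<in> L \<longleftrightarrow> v @ q' \<in> L" for v using synt_use[OF r2, of v "[]"] by simp
    ultimately show "Phi w p q" using ph unfolding Phi_def by simp
  qed (auto simp: T_def)
  have mem: "(p @ w @ q \<in> marked_concat K a L) \<longleftrightarrow>
     (\<exists>p1 p2. p = p1 @ a # p2 \<and> p1 \<in> K \<and> p2 @ w @ q \<in> L) \<or> Phi w p q \<or>
     (\<exists>q1 q2. q = q1 @ a # q2 \<and> p @ w @ q1 \<in> K \<and> q2 \<in> L)" for p w q
  proof -
    have "(p @ w @ q \<in> marked_concat K a L) \<longleftrightarrow> (\<exists>u v. p @ w @ q = u @ a # v \<and> u \<in> K \<and> v \<in> L)"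
      unfolding marked_concat_def by auto
    then show ?thesis unfolding split3 Phi_def by simp
  qed
  have rel: "(w, w') \<in> synt_cong (marked_concat K a L)" if "P w = P w'" for w w'
  proof (cases "\<forall>p q. Phi w p q")
    case True
    then have "\<forall>p q. Phi w' p q" using that unfolding P_def by (auto split: if_splits)
    then show ?thesis using True unfolding synt_cong_def by (simp add: mem)
  next
    case False
    then have "\<not> (\<forall>p q. Phi w' p q)" using that unfolding P_def by (auto split: if_splits)
    then have "P w' = Some (eta w', mu w', T w')" unfolding P_def by simp
    moreover have "P w = Some (eta w, mu w, T w)" using False unfolding P_def by simp
    ultimately have e: "eta w = eta w'" "mu w = mu w'" "T w = T w'" using that by simp_all
    have r1: "(w, w') \<in> synt_cong K" using e(1) synt_class_eq unfolding eta_def by metis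
    have r2: "(w, w') \<in> synt_cong L" using e(2) synt_class_eq unfolding mu_def by metis
    have ph: "Phi w p q \<longleftrightarrow> Phi w' p q" for p q using Tiff e(3) by metis
    show ?thesis unfolding synt_cong_def
    proof (clarify)
      fix p q
      show "(p @ w @ q \<in> marked_concat K a L) = (p @ w' @ q \<in> marked_concat K a L)"
      proof -
        have l: "(p2 @ w @ q \<in> L) = (p2 @ w' @ q \<in> L)" for p2 by (rule synt_use[OF r2])
        have k: "(p @ w @ q1 \<in> K) = (p @ w' @ q1 \<in> K)" for q1 by (rule synt_use[OF r1])
        show ?thesis unfolding mem l k ph ..
      qed
    qed
  qed
  define S where "S = M \<times> N \<times> (Pow (M \<times> N) - {M \<times> N})"
  have rng: "range P \<subseteq> insert None (Some ` S)"
  proof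
    fix x assume "x \<in> range P"
    then obtain w where x: "x = P w" by blast
    show "x \<in> insert None (Some ` S)"
    proof (cases "\<forall>p q. Phi w p q")
      case True then show ?thesis using x P_def by simp
    next
      case False
      then obtain p q where np: "\<not> Phi w p q" by blast
      have "T w \<subseteq> M \<times> N" unfolding T_def Mr Nr by auto
      moreover have "T w \<noteq> M \<times> N"
      proof -
        have "(eta p, mu q) \<in> M \<times> N" using Mr Nr by simp
        moreover have "(eta p, mu q) \<notin> T w" using np Tiff by simp
        ultimately show ?thesis by blast
      qed
      moreover have "eta w \<in> M" "mu w \<in> N" using Mr Nr by auto
      ultimately have "(eta w, mu w, T w) \<in> S" unfolding S_def by simp
      moreover have "x = Some (eta w, mu w, T w)" using x False unfolding P_def by simp
      ultimately show ?thesis by blast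
    qed
  qed
  have finS: "finite S" unfolding S_def using finM finN by simp
  have cS: "card S = m * n * (2 ^ (m * n) - 1)"
  proof -
    have "card (Pow (M \<times> N) - {M \<times> N}) = 2 ^ (m * n) - 1"
      using finM finN assms(4,5) M_def N_def by (simp add: card_Diff_singleton card_Pow card_cartesian_product)
    then show ?thesis unfolding S_def using assms(4,5) M_def N_def
      by (simp add: card_cartesian_product)
  qed
  have fin2: "finite (insert None (Some ` S))" using finS by simp
  have "card (range P) \<le> card (insert None (Some ` S))" using card_mono[OF fin2 rng] .
  also have "\<dots> \<le> card (Some ` S) + 1" using finS by (simp add: card_insert_if)
  also have "\<dots> = card S + 1" by (simp add: card_image)
  finally have cP: "card (range P) \<le> m * n * (2 ^ (m * n) - 1) + 1" using cS by simp
  have "finite (range P)" using finite_subset[OF rng fin2] .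
  then have "card (UNIV // synt_cong (marked_concat K a L)) \<le> card (range P)"
    using quot_card_le[OF synt_equiv rel] by blast
  then show ?thesis unfolding synt_monoid_def using cP by (rule order_trans)
qed

end
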